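(* Let $a\geq 1$ and $b\geq 1$ be integers. For Lebesgue-almost every $x\in\Lambda^{a+b}$ we have $\lim_{k\to\infty}T_{a,b}^k(x)=(x_1^{\infty},\ldots,x_{a+b}^{\infty})$ with $x_1^{\infty}=x_2^{\infty}=\cdots=x_{a+1}^{\infty}=0$.
   Context: For $n\geq 1$ let $\Lambda^n=\{x\in\mathbb{R}^n : 0\leq x_1\leq\cdots\leq x_n\}$. For integers $a,b\geq 1$ the map $T_{a,b}:\Lambda^{a+b}\to\Lambda^{a+b}$ sends $x$ to the vector obtained by arranging $x_1,\ldots,x_a,\,x_{a+1}-x_a,\ldots,x_{a+b}-x_a$ in nondecreasing order. *)

theory Defs
  imports "HOL-Probability.Probability"
begin

text \<open>Vectors in R^n are functions nat => real with coordinates 0..n-1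
  (coordinate x_i of the paper is x (i-1)), extensional outside {..<n}.
  Lebesgue measure on R^n is the product measure PiM {..<n} (\<lambda>_. lborel).\<close>

definition Lambda :: "nat \<Rightarrow> (nat \<Rightarrow> real) set" where
  "Lambda n = {x \<in> extensional {..<n}. (n > 0 \<longrightarrow> 0 \<le> x 0) \<and> (\<forall>i. Suc i < n \<longrightarrow> x i \<le> x (Suc i))}"

definition T :: "nat \<Rightarrow> nat \<Rightarrow> (nat \<Rightarrow> real) \<Rightarrow> (nat \<Rightarrow> real)" where
  "T a b x = (let ys = sort (map (\<lambda>i. if i < a then x i else x i - x (a - 1)) [0..<a+b])
              in restrict (\<lambda>i. ys ! i) {..<a+b})"

end

theory Submission
  imports Defs "HOL-Combinatorics.Permutations"
begin

lemma hyper_null: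
  fixes c :: "nat \<Rightarrow> real"
  assumes I: "finite I" and j: "j \<in> I" and cj: "c j \<noteq> 0"
  shows "{x \<in> space (PiM I (\<lambda>_. lborel)). (\<Sum>k\<in>I. c k * x k) = 0} \<in> null_sets (PiM I (\<lambda>_. lborel))"
proof -
  interpret product_sigma_finite "\<lambda>_. lborel" by standard
  define J where "J = I - {j}"
  have IJ: "I = insert j J" "finite J" "j \<notin> J" using I j by (auto simp: J_def)
  define H where "H = {x \<in> space (PiM I (\<lambda>_. lborel)). (\<Sum>k\<in>I. c k * x k) = 0}"
  have Hm: "H \<in> sets (PiM I (\<lambda>_. lborel))" unfolding H_def by measurable
  have "emeasure (PiM I (\<lambda>_. lborel)) H = (\<integral>\<^sup>+ x. indicator H x \<partial>PiM I (\<lambda>_. lborel))"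
    using Hm by simp
  also have "\<dots> = (\<integral>\<^sup>+ x. (\<integral>\<^sup>+ y. indicator H (x(j := y)) \<partial>lborel) \<partial>PiM J (\<lambda>_. lborel))"
    unfolding IJ(1) by (rule product_nn_integral_insert) (use IJ Hm in auto)
  also have "\<dots> = (\<integral>\<^sup>+ x. 0 \<partial>PiM J (\<lambda>_. lborel :: real measure))"
  proof -
  have inner0: "(\<integral>\<^sup>+ y. indicator H (x(j := y)) \<partial>lborel) = 0" for x
  proof -
    define y0 where "y0 = - (\<Sum>k\<in>J. c k * x k) / c j"
    have "(\<integral>\<^sup>+ y. indicator H (x(j := y)) \<partial>lborel) \<le> (\<integral>\<^sup>+ y. indicator {y0} y \<partial>lborel)"
    proof (rule nn_integral_mono)
      fix y
      show "indicator H (x(j := y)) \<le> (indicator {y0} y :: ennreal)"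
      proof (cases "x(j := y) \<in> H")
        case True
        then have "(\<Sum>k\<in>I. c k * (x(j := y)) k) = 0" by (simp add: H_def)
        moreover have "(\<Sum>k\<in>I. c k * (x(j := y)) k) = c j * y + (\<Sum>k\<in>J. c k * (x(j := y)) k)"
          unfolding IJ(1) using IJ(2,3) by simp
        moreover have "(\<Sum>k\<in>J. c k * (x(j := y)) k) = (\<Sum>k\<in>J. c k * x k)"
          using IJ(3) by (intro sum.cong) auto
        ultimately have "c j * y + (\<Sum>k\<in>J. c k * x k) = 0" by simp
        then have "y = y0" using cj unfolding y0_def by (simp add: field_simps)
        then show ?thesis by (simp add: indicator_def)
      qed simp
    qed
    also have "\<dots> = 0" by simp
    finally show "(\<integral>\<^sup>+ y. indicator H (x(j := y)) \<partial>lborel) = 0" by simp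
  qed
  show ?thesis by (simp only: inner0)
  qed
  also have "\<dots> = 0" by simp
  finally show ?thesis using Hm unfolding H_def by (simp add: null_sets_def)
qed

definition vl :: "nat \<Rightarrow> nat \<Rightarrow> (nat \<Rightarrow> real) \<Rightarrow> real list" where
  "vl a b x = map (\<lambda>i. if i < a then x i else x i - x (a - 1)) [0..<a+b]"

lemma T_vl: "T a b x = restrict (\<lambda>i. sort (vl a b x) ! i) {..<a+b}"
  unfolding T_def vl_def Let_def by simp

lemma length_vl[simp]: "length (vl a b x) = a + b"
  by (simp add: vl_def)

lemma nth_vl: "i < a + b \<Longrightarrow> vl a b x ! i = (if i < a then x i else x i - x (a - 1))"
  by (simp add: vl_def)

lemma Lambda_mono:
  assumes x: "x \<in> Lambda n" shows "i \<le> j \<Longrightarrow> j < n \<Longrightarrow> x i \<le> x j"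
proof (induction j)
  case 0 then show ?case by simp
next
  case (Suc j)
  show ?case
  proof (cases "i = Suc j")
    case False
    then have "x i \<le> x j" using Suc by simp
    also have "x j \<le> x (Suc j)" using x Suc.prems by (simp add: Lambda_def)
    finally show ?thesis .
  qed simp
qed

lemma Lambda_nonneg:
  assumes x: "x \<in> Lambda n" and i: "i < n" shows "0 \<le> x i"
proof -
  have "0 \<le> x 0" using x i by (simp add: Lambda_def)
  also have "x 0 \<le> x i" using Lambda_mono[OF x, of 0 i] i by simp
  finally show ?thesis .
qed

lemma vl_nonneg:
  assumes x: "x \<in> Lambda (a+b)" and a: "a \<ge> 1" and k: "k < a + b"
  shows "0 \<le> vl a b x ! k"
proof (cases "k < a")
  case True then show ?thesis using Lambda_nonneg[OF x k] k by (simp add: nth_vl)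
next
  case False
  then have "x (a - 1) \<le> x k" using Lambda_mono[OF x, of "a-1" k] k by simp
  then show ?thesis using False k by (simp add: nth_vl)
qed

lemma vl_le:
  assumes x: "x \<in> Lambda (a+b)" and a: "a \<ge> 1" and k: "k < a + b"
  shows "vl a b x ! k \<le> x k"
  using Lambda_nonneg[OF x, of "a-1"] a k by (simp add: nth_vl)

lemma length_filter_sort:
  "length (filter P (sort l)) = length (filter P l)"
  by (metis mset_filter mset_sort size_mset)

lemma sort_nth_le:
  fixes l :: "real list"
  assumes i: "i < length (filter (\<lambda>y. y \<le> t) l)"
  shows "sort l ! i \<le> t"
proof (rule ccontr)
  assume "\<not> sort l ! i \<le> t"
  then have lt: "t < sort l ! i" by simp
  define s where "s = sort l"
  have "{k. k < length s \<and> s ! k \<le> t} \<subseteq> {..<i}"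
  proof
    fix k assume k: "k \<in> {k. k < length s \<and> s ! k \<le> t}"
    show "k \<in> {..<i}"
    proof (rule ccontr)
      assume "k \<notin> {..<i}"
      then have "s ! i \<le> s ! k" using k unfolding s_def
        by (intro sorted_nth_mono) auto
      then show False using k lt unfolding s_def by simp
    qed
  qed
  then have "card {k. k < length s \<and> s ! k \<le> t} \<le> i"
    by (metis card_lessThan card_mono finite_lessThan)
  then have "length (filter (\<lambda>y. y \<le> t) s) \<le> i"
    by (simp add: length_filter_conv_card)
  then show False using i unfolding s_def length_filter_sort by simp
qed

lemma T_le:
  assumes x: "x \<in> Lambda (a+b)" and a: "a \<ge> 1" and i: "i < a + b"
  shows "T a b x i \<le> x i"
proof -
  have "{..i} \<subseteq> {k. k < length (vl a b x) \<and> vl a b x ! k \<le> x i}"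
  proof
    fix k assume "k \<in> {..i}"
    then have k: "k \<le> i" by simp
    then have "vl a b x ! k \<le> x k" using vl_le[OF x a] i by simp
    also have "x k \<le> x i" using Lambda_mono[OF x k i] .
    finally show "k \<in> {k. k < length (vl a b x) \<and> vl a b x ! k \<le> x i}" using k i by simp
  qed
  then have "card {..i} \<le> card {k. k < length (vl a b x) \<and> vl a b x ! k \<le> x i}"
    by (intro card_mono) auto
  then have "i < length (filter (\<lambda>y. y \<le> x i) (vl a b x))"
    by (simp add: length_filter_conv_card)
  then have "sort (vl a b x) ! i \<le> x i" by (rule sort_nth_le)
  then show ?thesis using i by (simp add: T_vl)
qed

lemma T_Lambda:
  assumes x: "x \<in> Lambda (a+b)" and a: "a \<ge> 1"
  shows "T a b x \<in> Lambda (a+b)"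
proof -
  have ext: "T a b x \<in> extensional {..<a+b}" by (simp add: T_vl)
  have nn: "0 \<le> T a b x 0" if "a + b > 0"
  proof -
    have "sort (vl a b x) ! 0 \<in> set (vl a b x)"
      using that by (metis length_sort length_vl nth_mem set_sort)
    then obtain k where "k < a + b" "vl a b x ! 0 = vl a b x ! 0" "sort (vl a b x) ! 0 = vl a b x ! k"
      by (metis in_set_conv_nth length_vl)
    then show ?thesis using vl_nonneg[OF x a] that by (simp add: T_vl)
  qed
  have mono: "T a b x i \<le> T a b x (Suc i)" if "Suc i < a + b" for i
  proof -
    have "sort (vl a b x) ! i \<le> sort (vl a b x) ! Suc i"
      using that by (intro sorted_nth_mono) auto
    then show ?thesis using that by (simp add: T_vl)
  qed
  show ?thesis using ext nn mono by (simp add: Lambda_def)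
qed

lemma T_sum:
  assumes x: "x \<in> Lambda (a+b)" and a: "a \<ge> 1"
  shows "(\<Sum>i<a+b. T a b x i) = (\<Sum>i<a+b. x i) - real b * x (a - 1)"
proof -
  have "(\<Sum>i<a+b. T a b x i) = (\<Sum>i<a+b. sort (vl a b x) ! i)"
    by (simp add: T_vl)
  also have "\<dots> = sum_list (sort (vl a b x))"
    by (simp add: sum_list_sum_nth atLeast0LessThan)
  also have "\<dots> = sum_list (vl a b x)"
    by (metis mset_sort sum_mset_sum_list)
  also have "\<dots> = (\<Sum>i<a+b. vl a b x ! i)"
    by (simp add: sum_list_sum_nth atLeast0LessThan)
  also have "\<dots> = (\<Sum>i<a+b. x i - (if i < a then 0 else x (a - 1)))"
    by (intro sum.cong) (auto simp: nth_vl)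
  also have "\<dots> = (\<Sum>i<a+b. x i) - (\<Sum>i<a+b. (if i < a then 0 else x (a - 1)))"
    by (rule sum_subtractf)
  also have "(\<Sum>i<a+b. (if i < a then 0 else x (a - 1))) = (\<Sum>i\<in>{a..<a+b}. x (a - 1))"
    by (rule sum.mono_neutral_cong_right) auto
  also have "\<dots> = real b * x (a - 1)" by simp
  finally show ?thesis .
qed

lemma T_fix:
  assumes x: "x \<in> Lambda (a+b)" and a: "a \<ge> 1" and b: "b \<ge> 1"
    and h: "2 * x (a - 1) \<le> x a" and i: "i < a"
  shows "T a b x i = x i"
proof -
  have "sorted (vl a b x)"
    unfolding sorted_iff_nth_mono
  proof (intro allI impI)
    fix i j assume ij: "i \<le> j" "j < length (vl a b x)"
    then have j: "j < a + b" by simp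
    show "vl a b x ! i \<le> vl a b x ! j"
    proof (cases "j < a")
      case True then show ?thesis using ij Lambda_mono[OF x ij(1) j] by (simp add: nth_vl)
    next
      case False
      have m1: "x a \<le> x j" using Lambda_mono[OF x, of a j] False j by simp
      show ?thesis
      proof (cases "i < a")
        case True
        have "x i \<le> x (a - 1)" using Lambda_mono[OF x, of i "a-1"] True j by simp
        then show ?thesis using True False j h m1 by (simp add: nth_vl)
      next
        case False': False
        then show ?thesis using False j ij Lambda_mono[OF x ij(1) j] by (simp add: nth_vl)
      qed
    qed
  qed
  then have "sort (vl a b x) = vl a b x" by (rule sorted_sort_id)
  then show ?thesis using i by (simp add: T_vl nth_vl)
qed

lemma iter_Lambda:
  assumes x: "x \<in> Lambda (a+b)" and a: "a \<ge> 1"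
  shows "(T a b ^^ k) x \<in> Lambda (a+b)"
  by (induction k) (use x T_Lambda[OF _ a] in auto)

lemma main_dyn:
  assumes x: "x \<in> Lambda (a+b)" and a: "a \<ge> 1" and b: "b \<ge> 1"
  shows "\<exists>L. (\<forall>i<a+b. (\<lambda>k. ((T a b ^^ k) x) i) \<longlonglongrightarrow> L i) \<and> (\<forall>i<a. L i = 0)
          \<and> (L a \<noteq> 0 \<longrightarrow> (\<exists>K. (T a b ^^ K) x (a - 1) = 0))"
proof -
  define X where "X k = (T a b ^^ k) x" for k
  have XL: "X k \<in> Lambda (a+b)" for k unfolding X_def by (rule iter_Lambda[OF x a])
  have XS: "X (Suc k) = T a b (X k)" for k by (simp add: X_def)
  have dec: "decseq (\<lambda>k. X k i)" if i: "i < a + b" for i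
    by (rule decseq_SucI) (simp add: XS T_le[OF XL a i])
  have nn: "0 \<le> X k i" if "i < a + b" for i k using Lambda_nonneg[OF XL that] .
  define L where "L i = lim (\<lambda>k. X k i)" for i
  have conv: "(\<lambda>k. X k i) \<longlonglongrightarrow> L i" if i: "i < a + b" for i
  proof -
    obtain l where "(\<lambda>k. X k i) \<longlonglongrightarrow> l" using decseq_convergent[OF dec[OF i], of 0] nn[OF i] by blast
    then show ?thesis unfolding L_def by (simp add: limI)
  qed
  have Lle: "L i \<le> X k i" if "i < a + b" for i k
    by (rule decseq_ge[OF dec[OF that] conv[OF that]])
  have Lnn: "0 \<le> L i" if "i < a + b" for i
    by (rule LIMSEQ_le_const[OF conv[OF that]]) (use nn[OF that] in auto)
  have a1: "a - 1 < a + b" using a by simp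
  have La1: "L (a - 1) = 0"
  proof (rule ccontr)
    assume "L (a - 1) \<noteq> 0"
    then have pos: "L (a - 1) > 0" using Lnn[OF a1] by simp
    define S where "S k = (\<Sum>i<a+b. X k i)" for k
    have Sk: "S k \<le> S 0 - real k * L (a - 1)" for k
    proof (induction k)
      case (Suc k)
      have "S (Suc k) = S k - real b * X k (a - 1)"
        unfolding S_def XS by (rule T_sum[OF XL a])
      also have "real b * X k (a - 1) \<ge> L (a - 1)"
      proof -
        have "L (a - 1) \<le> X k (a - 1)" by (rule Lle[OF a1])
        also have "X k (a - 1) \<le> real b * X k (a - 1)"
          using b nn[OF a1, of k] by (simp add: mult_le_cancel_right1)
        finally show ?thesis .
      qed
      then have "S k - real b * X k (a - 1) \<le> S k - L (a - 1)" by simp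
      finally show ?case using Suc by (simp add: algebra_simps)
    qed simp
    obtain k where k: "S 0 / L (a - 1) < real k" using reals_Archimedean2 by blast
    then have "S 0 < real k * L (a - 1)" using pos by (simp add: field_simps)
    moreover have "0 \<le> S k" unfolding S_def by (intro sum_nonneg) (use nn in auto)
    ultimately show False using Sk[of k] by simp
  qed
  have Lsmall: "L i = 0" if i: "i < a" for i
  proof -
    have ii: "i < a + b" using i by simp
    have "L i \<le> L (a - 1)"
    proof (rule LIMSEQ_le[OF conv[OF ii] conv[OF a1]])
      show "\<exists>N. \<forall>n\<ge>N. X n i \<le> X n (a - 1)"
        using Lambda_mono[OF XL, of i "a-1"] i a1 by auto
    qed
    then show ?thesis using La1 Lnn[OF ii] by simp
  qed
  have last: "\<exists>K. X K (a - 1) = 0" if La: "L a \<noteq> 0"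
  proof -
    have aa: "a < a + b" using b by simp
    have pos: "L a > 0" using La Lnn[OF aa] by simp
    have "eventually (\<lambda>k. X k (a - 1) < L a / 2) sequentially"
      using conv[OF a1] La1 pos by (intro order_tendstoD(2)) auto
    then obtain K where K: "\<And>k. k \<ge> K \<Longrightarrow> X k (a - 1) < L a / 2"
      by (auto simp: eventually_sequentially)
    have step: "X (Suc k) (a - 1) = X k (a - 1)" if "k \<ge> K" for k
    proof -
      have "2 * X k (a - 1) \<le> X k a" using K[OF that] Lle[OF aa, of k] by simp
      then show ?thesis unfolding XS using T_fix[OF XL a b] a by simp
    qed
    have const: "X (d + K) (a - 1) = X K (a - 1)" for d
      by (induction d) (use step in auto)
    have "(\<lambda>d. X (d + K) (a - 1)) \<longlonglongrightarrow> L (a - 1)"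
      by (rule LIMSEQ_ignore_initial_segment[OF conv[OF a1]])
    then have "(\<lambda>d. X K (a - 1)) \<longlonglongrightarrow> L (a - 1)" using const by simp
    then have "X K (a - 1) = L (a - 1)" using LIMSEQ_const_iff by blast
    then show ?thesis using La1 by (intro exI[of _ K]) simp
  qed
  show ?thesis
    by (rule exI[of _ L]) (use conv Lsmall last in \<open>auto simp: X_def\<close>)
qed

definition rep :: "nat \<Rightarrow> (nat \<Rightarrow> nat \<Rightarrow> int) \<Rightarrow> (nat \<Rightarrow> real) \<Rightarrow> (nat \<Rightarrow> real) \<Rightarrow> bool" where
  "rep n R x y \<longleftrightarrow> (\<forall>i<n. y i = (\<Sum>j<n. of_int (R i j) * x j))"

definition indep :: "nat \<Rightarrow> (nat \<Rightarrow> nat \<Rightarrow> int) \<Rightarrow> bool" where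
  "indep n R \<longleftrightarrow> (\<forall>lam::nat \<Rightarrow> real. (\<forall>j<n. (\<Sum>i<n. lam i * of_int (R i j)) = 0) \<longrightarrow> (\<forall>i<n. lam i = 0))"

lemma indep_row:
  assumes "indep n R" "r < n" shows "\<exists>j<n. R r j \<noteq> 0"
proof (rule ccontr)
  assume "\<not> (\<exists>j<n. R r j \<noteq> 0)"
  then have z: "\<forall>j<n. R r j = 0" by simp
  define lam :: "nat \<Rightarrow> real" where "lam i = (if i = r then 1 else 0)" for i
  have "(\<Sum>i<n. lam i * of_int (R i j)) = 0" if j: "j < n" for j
  proof -
    have "(\<Sum>i<n. lam i * of_int (R i j)) = (\<Sum>i<n. if i = r then of_int (R r j) else 0)"
      by (intro sum.cong) (auto simp: lam_def)
    also have "\<dots> = of_int (R r j)" using assms(2) by simp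
    finally show ?thesis using z j by simp
  qed
  then have "lam r = 0" using assms unfolding indep_def by blast
  then show False by (simp add: lam_def)
qed

lemma step_rep:
  assumes y: "y \<in> Lambda (a+b)" and a: "a \<ge> 1" and b: "b \<ge> 1"
    and r: "rep (a+b) R x y" and ind: "indep (a+b) R"
  shows "\<exists>R'. rep (a+b) R' x (T a b y) \<and> indep (a+b) R'"
proof -
  define n where "n = a + b"
  define v where "v = vl a b y"
  have "mset (sort v) = mset v" by simp
  then obtain p where p: "p permutes {..<length v}" and pv: "permute_list p v = sort v"
    by (rule mset_eq_permutation)
  have p': "p permutes {..<n}" using p by (simp add: v_def n_def)
  have pin: "p i < n" if "i < n" for i using permutes_in_image[OF p'] that by simp
  have a1: "a - 1 < n" using a by (simp add: n_def)
  have Ty: "T a b y i = (if p i < a then y (p i) else y (p i) - y (a - 1))" if i: "i < n" for i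
  proof -
    have "T a b y i = sort v ! i" using i by (simp add: T_vl v_def n_def)
    also have "\<dots> = permute_list p v ! i" using pv by simp
    also have "\<dots> = v ! p i" using i p by (intro permute_list_nth) (simp_all add: v_def n_def)
    finally show ?thesis using pin[OF i] by (simp add: v_def nth_vl n_def)
  qed
  define R' where "R' i j = R (p i) j - (if p i < a then 0 else R (a - 1) j)" for i j
  have rep': "rep n R' x (T a b y)"
    unfolding rep_def
  proof (intro allI impI)
    fix i assume i: "i < n"
    have e1: "y (p i) = (\<Sum>j<n. of_int (R (p i) j) * x j)" using r pin[OF i] by (simp add: rep_def n_def)
    have e2: "y (a - 1) = (\<Sum>j<n. of_int (R (a - 1) j) * x j)" using r a1 by (simp add: rep_def n_def)
    show "T a b y i = (\<Sum>j<n. of_int (R' i j) * x j)"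
    proof (cases "p i < a")
      case True then show ?thesis using e1 Ty[OF i] by (simp add: R'_def)
    next
      case False
      have "(\<Sum>j<n. of_int (R' i j) * x j) = (\<Sum>j<n. of_int (R (p i) j) * x j - of_int (R (a - 1) j) * x j)"
        using False by (intro sum.cong) (auto simp: R'_def algebra_simps)
      also have "\<dots> = y (p i) - y (a - 1)" by (simp only: sum_subtractf e1 e2)
      finally show ?thesis using False Ty[OF i] by simp
    qed
  qed
  have ind': "indep n R'"
    unfolding indep_def
  proof (rule allI, rule impI)
    fix lam :: "nat \<Rightarrow> real"
    assume H: "\<forall>j<n. (\<Sum>i<n. lam i * of_int (R' i j)) = 0"
    define s where "s = (\<Sum>i<n. if p i < a then 0 else lam i)"
    define mu where "mu l = lam (inv p l) - (if l = a - 1 then s else 0)" for l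
    have bij: "bij_betw p {..<n} {..<n}" using p' by (rule permutes_imp_bij)
    have "(\<Sum>l<n. mu l * of_int (R l j)) = 0" if j: "j < n" for j
    proof -
      have A: "(\<Sum>l<n. lam (inv p l) * of_int (R l j)) = (\<Sum>i<n. lam i * of_int (R (p i) j))"
        using sum.reindex_bij_betw[OF bij, of "\<lambda>l. lam (inv p l) * of_int (R l j)"]
        by (simp add: permutes_inverses(2)[OF p'])
      have B: "(\<Sum>l<n. (if l = a - 1 then s else 0) * of_int (R l j)) = s * of_int (R (a - 1) j)"
      proof -
        have "(\<Sum>l<n. (if l = a - 1 then s else 0) * of_int (R l j)) = (\<Sum>l<n. if l = a - 1 then s * of_int (R (a - 1) j) else 0)"
          by (intro sum.cong) auto
        also have "\<dots> = s * of_int (R (a - 1) j)" using a1 by (simp only: sum.delta finite_lessThan lessThan_iff if_True)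
        finally show ?thesis .
      qed
      have C: "(\<Sum>i<n. lam i * of_int (R' i j)) = (\<Sum>i<n. lam i * of_int (R (p i) j)) - s * of_int (R (a - 1) j)"
      proof -
        have "(\<Sum>i<n. lam i * of_int (R' i j)) = (\<Sum>i<n. lam i * of_int (R (p i) j) - (if p i < a then 0 else lam i) * of_int (R (a - 1) j))"
          by (intro sum.cong) (auto simp: R'_def algebra_simps)
        also have "\<dots> = (\<Sum>i<n. lam i * of_int (R (p i) j)) - s * of_int (R (a - 1) j)"
          by (simp add: sum_subtractf s_def sum_distrib_right)
        finally show ?thesis .
      qed
      have "(\<Sum>l<n. mu l * of_int (R l j)) = (\<Sum>l<n. lam (inv p l) * of_int (R l j)) - (\<Sum>l<n. (if l = a - 1 then s else 0) * of_int (R l j))"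
        by (simp add: mu_def left_diff_distrib sum_subtractf)
      also have "\<dots> = 0" using A B C H j by simp
      finally show ?thesis .
    qed
    then have mu0: "mu l = 0" if "l < n" for l using ind that unfolding indep_def n_def by blast
    have lam1: "lam i = 0" if "i < n" "p i \<noteq> a - 1" for i
      using mu0[OF pin[OF that(1)]] that by (simp add: mu_def permutes_inverses(2)[OF p'])
    have s0: "s = 0" unfolding s_def
    proof (intro sum.neutral ballI)
      fix i assume i: "i \<in> {..<n}"
      show "(if p i < a then 0 else lam i) = 0"
      proof (cases "p i < a")
        case False
        then have "p i \<noteq> a - 1" using a by linarith
        then show ?thesis using lam1 i False by simp
      qed simp
    qed
    show "\<forall>i<n. lam i = 0"
    proof (intro allI impI)
      fix i assume i: "i < n"
      show "lam i = 0"
      proof (cases "p i = a - 1")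
        case True
        have "mu (p i) = lam (inv p (p i)) - (if p i = a - 1 then s else 0)" by (simp only: mu_def)
        then have "mu (p i) = lam i" by (simp only: permutes_inverses(2)[OF p'] s0 if_cancel diff_zero)
        then show ?thesis using mu0[OF pin[OF i]] by simp
      qed (use lam1 i in auto)
    qed
  qed
  show ?thesis using rep' ind' by (auto simp: n_def)
qed

lemma iter_rep:
  assumes x: "x \<in> Lambda (a+b)" and a: "a \<ge> 1" and b: "b \<ge> 1"
  shows "\<exists>R. rep (a+b) R x ((T a b ^^ k) x) \<and> indep (a+b) R"
proof (induction k)
  case 0
  define R :: "nat \<Rightarrow> nat \<Rightarrow> int" where "R i j = (if i = j then 1 else 0)" for i j
  have "rep (a+b) R x x" unfolding rep_def
  proof (intro allI impI)
    fix i assume i: "i < a + b"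
    have "(\<Sum>j<a+b. of_int (R i j) * x j) = (\<Sum>j<a+b. if j = i then x i else 0)"
      by (intro sum.cong) (auto simp: R_def)
    then show "x i = (\<Sum>j<a+b. of_int (R i j) * x j)" using i by simp
  qed
  moreover have "indep (a+b) R" unfolding indep_def
  proof (intro allI impI)
    fix lam :: "nat \<Rightarrow> real" and i
    assume H: "\<forall>j<a+b. (\<Sum>i<a+b. lam i * of_int (R i j)) = 0" and i: "i < a + b"
    have "(\<Sum>k<a+b. lam k * of_int (R k i)) = (\<Sum>k<a+b. if k = i then lam i else 0)"
      by (intro sum.cong) (auto simp: R_def)
    then show "lam i = 0" using H i by simp
  qed
  ultimately show ?case by auto
next
  case (Suc k)
  then obtain R where "rep (a+b) R x ((T a b ^^ k) x)" "indep (a+b) R" by blast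
  then show ?case using step_rep[OF iter_Lambda[OF x a] a b] by simp
qed

theorem lemma4p2:
  fixes a b :: nat
  assumes "a \<ge> 1" and "b \<ge> 1"
  shows "AE x in PiM {..<a+b} (\<lambda>_. lborel).
           x \<in> Lambda (a+b) \<longrightarrow>
           (\<exists>L :: nat \<Rightarrow> real.
              (\<forall>i < a+b. (\<lambda>k. ((T a b ^^ k) x) i) \<longlonglongrightarrow> L i) \<and>
              (\<forall>i \<le> a. L i = 0))"
proof -
  define n where "n = a + b"
  define M where "M = PiM {..<n} (\<lambda>_. lborel :: real measure)"
  define H where "H cs = {x \<in> space M. (\<Sum>k\<in>{..<n}. of_int (cs ! k) * x k) = (0::real)}" for cs :: "int list"
  define C where "C = {cs :: int list. length cs = n \<and> (\<exists>j<n. cs ! j \<noteq> 0)}"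
  have Nnull: "(\<Union>cs\<in>C. H cs) \<in> null_sets M"
  proof (rule null_sets_UN')
    show "countable C" by (rule countableI_type)
  next
    fix cs assume "cs \<in> C"
    then obtain j where "j < n" "cs ! j \<noteq> 0" by (auto simp: C_def)
    then show "H cs \<in> null_sets M" unfolding H_def M_def
      by (intro hyper_null[of "{..<n}" j "\<lambda>k. of_int (cs ! k)"]) auto
  qed
  have key: "x \<in> (\<Union>cs\<in>C. H cs)" if xs: "x \<in> space M" and xL: "x \<in> Lambda n"
      and notP: "\<not> (\<exists>L::nat\<Rightarrow>real. (\<forall>i<n. (\<lambda>k. (T a b ^^ k) x i) \<longlonglongrightarrow> L i) \<and> (\<forall>i\<le>a. L i = 0))" for x
  proof -
    obtain L where L1: "\<forall>i<n. (\<lambda>k. (T a b ^^ k) x i) \<longlonglongrightarrow> L i" and L2: "\<forall>i<a. L i = 0"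
      and L3: "L a \<noteq> 0 \<longrightarrow> (\<exists>K. (T a b ^^ K) x (a - 1) = 0)"
      using main_dyn[OF xL[unfolded n_def] assms] unfolding n_def by blast
    have "L a \<noteq> 0"
    proof
      assume "L a = 0"
      then have "\<forall>i\<le>a. L i = 0" using L2 by (metis le_neq_implies_less)
      then show False using notP L1 by blast
    qed
    then obtain K where K: "(T a b ^^ K) x (a - 1) = 0" using L3 by blast
    obtain R where R: "rep n R x ((T a b ^^ K) x)" "indep n R"
      using iter_rep[OF xL[unfolded n_def] assms, of K] unfolding n_def by blast
    have a1: "a - 1 < n" using assms by (simp add: n_def)
    obtain j where j: "j < n" "R (a - 1) j \<noteq> 0" using indep_row[OF R(2) a1] by blast
    define cs where "cs = map (R (a - 1)) [0..<n]"
    have csC: "cs \<in> C" using j by (auto simp: C_def cs_def)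
    have "(\<Sum>k\<in>{..<n}. of_int (cs ! k) * x k) = (\<Sum>k<n. of_int (R (a - 1) k) * x k)"
      by (intro sum.cong) (auto simp: cs_def)
    also have "\<dots> = (T a b ^^ K) x (a - 1)" using R(1) a1 by (simp add: rep_def)
    finally have "x \<in> H cs" using K xs by (simp add: H_def)
    then show "x \<in> (\<Union>cs\<in>C. H cs)" using csC by blast
  qed
  show ?thesis
    unfolding n_def[symmetric] M_def[symmetric]
    by (rule AE_I'[OF Nnull]) (use key in blast)
qed

end
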